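(* Let $\alpha>0$, $R>0$, $B>R$. In the Gaussian white noise model $dX^{(n)}(t)=f(t)dt+n^{-1/2}dW(t)$ on $[0,1]$, let $x_{lk}=\int_0^1\psi_{lk}dX^{(n)}=f_{lk}+n^{-1/2}\varepsilon_{lk}$ with $f_{lk}=\langle f,\psi_{lk}\rangle_2$ and $\varepsilon_{lk}$ i.i.d. $N(0,1)$. Suppose the true $f_0$ satisfies $\sup_{l,k}2^{l(1/2+\alpha)}|f_{0,lk}|\le R$. Let the prior $\Pi$ make the $f_{lk}$ independent with Lebesgue density $\sigma_l^{-1}\varphi(\cdot/\sigma_l)$ on $\mathbb{R}$, where $\varphi=\frac1{2B}\mathbf 1_{[-B,B]}$ and $\sigma_l=2^{-l(1/2+\alpha)}$. Let $L_n=\lfloor\log_2((n/\log n)^{1/(2\alpha+1)})\rfloor$. Then there exists $C>0$ such that for every real $t$, every $n\ge2$, every $0\le l\le L_n$ and every $0\le k\le2^l-1$, $$E_{f_0}^n\,E^\Pi\big[e^{t\sqrt n(f_{lk}-x_{lk})}\mid X^{(n)}\big]\le Ce^{t^2/2}.$$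
   Context: $\{\psi_{lk}\}$ is a (Cohen–Daubechies–Vial boundary-corrected) wavelet orthonormal basis of $L^2[0,1]$ indexed by $l\ge0$, $0\le k\le2^l-1$. $E^\Pi[\cdot\mid X^{(n)}]$ denotes expectation under the posterior distribution and $E^n_{f_0}$ expectation under the model with $f=f_0$. *)

theory Defs
  imports "HOL-Probability.Probability"
begin

definition phiB :: "real \<Rightarrow> real \<Rightarrow> real" where
  "phiB B u = (if -B \<le> u \<and> u \<le> B then 1 / (2 * B) else 0)"

definition sigma_lev :: "real \<Rightarrow> nat \<Rightarrow> real" where
  "sigma_lev \<alpha> l = 2 powr (- (real l * (1/2 + \<alpha>)))"

definition prior_dens :: "real \<Rightarrow> real \<Rightarrow> real \<Rightarrow> real" where
  "prior_dens B \<sigma> u = phiB B (u / \<sigma>) / \<sigma>"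

text \<open>Likelihood of the coefficient value u given the observation x_lk = x
  in the sequence (white noise) model with noise level n^(-1/2).\<close>
definition lik :: "nat \<Rightarrow> real \<Rightarrow> real \<Rightarrow> real" where
  "lik n x u = exp (- real n * (u - x)^2 / 2)"

text \<open>Posterior expectation of g(f_lk) given the data (Bayes formula). By
  independence of the prior coordinates and of the noise, the posterior of
  f_lk depends on the data only through x_lk = x.\<close>
definition post_exp :: "nat \<Rightarrow> real \<Rightarrow> real \<Rightarrow> (real \<Rightarrow> real) \<Rightarrow> real \<Rightarrow> real" where
  "post_exp n B \<sigma> g x =
     (LINT u|lborel. g u * lik n x u * prior_dens B \<sigma> u) /
     (LINT u|lborel. lik n x u * prior_dens B \<sigma> u)"

definition L_cut :: "real \<Rightarrow> nat \<Rightarrow> int" where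
  "L_cut \<alpha> n = \<lfloor>log 2 ((real n / ln (real n)) powr (1 / (2 * \<alpha> + 1)))\<rfloor>"

end

theory Submission
  imports Defs
begin

lemma pd_ind:
  assumes "B > 0" "\<sigma> > 0"
  shows "prior_dens B \<sigma> u = indicator {-(B*\<sigma>)..B*\<sigma>} u / (2*(B*\<sigma>))"
proof -
  have "(-B \<le> u/\<sigma> \<and> u/\<sigma> \<le> B) \<longleftrightarrow> u \<in> {-(B*\<sigma>)..B*\<sigma>}"
    using assms by (auto simp: field_simps)
  then show ?thesis using assms
    by (auto simp: prior_dens_def phiB_def indicator_def field_simps)
qed

lemma E1:
  assumes "r = sqrt (real n)"
  shows "exp (t*r*(u-x)) * lik n x u = exp (t\<^sup>2/2) * exp (-(r*(u-x)-t)\<^sup>2/2)"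
proof -
  have n: "real n = r^2" using assms by simp
  have "exp (t*r*(u-x)) * lik n x u = exp (t*r*(u-x) - real n * (u-x)\<^sup>2/2)"
    by (simp add: lik_def exp_add[symmetric])
  also have "t*r*(u-x) - real n * (u-x)\<^sup>2/2 = t\<^sup>2/2 + (-(r*(u-x)-t)\<^sup>2/2)"
    unfolding n by (simp add: power2_eq_square field_simps)
  finally show ?thesis by (simp add: exp_add[symmetric])
qed

lemma E2:
  assumes "r > 0"
  shows "normal_density (x+t/r) (1/r) u = r/sqrt(2*pi) * exp (-(r*(u-x)-t)\<^sup>2/2)"
proof -
  have a: "sqrt (2*pi*(1/r)\<^sup>2) = sqrt (2*pi) / r" using assms
    by (simp add: real_sqrt_divide power_divide)
  have b: "(u - (x+t/r))\<^sup>2 / (2*(1/r)\<^sup>2) = (r*(u-x)-t)\<^sup>2/2" using assms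
    by (simp add: power2_eq_square field_simps)
  show ?thesis unfolding normal_density_def a
    using b by (simp add: field_simps)
qed


lemma interval_choice:
  fixes W l x :: real
  assumes "l > 0" "l \<le> 2*W"
  defines "p \<equiv> max (-W) (min (W-l) (x - l/2))"
  shows "-W \<le> p" "p + l \<le> W" "\<And>u. p \<le> u \<Longrightarrow> u \<le> p + l \<Longrightarrow> \<bar>u - x\<bar> \<le> max (\<bar>x\<bar> - W) 0 + l"
  using assms by (auto simp: p_def max_def min_def abs_if split: if_splits)

lemma post_bound:
  fixes n :: nat and B \<sigma> \<delta> t x :: real
  assumes n: "n > 0" and B: "B > 0" and sg: "\<sigma> > 0" and d: "\<delta> > 0" "\<delta> \<le> 2* sqrt n*(B*\<sigma>)"
  shows "post_exp n B \<sigma> (\<lambda>u. exp (t* sqrt n*(u-x))) x \<le>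
    exp (t\<^sup>2/2) * sqrt (2*pi) / \<delta> * exp ((max (sqrt n*\<bar>x\<bar> - sqrt n*(B*\<sigma>)) 0 + \<delta>)\<^sup>2/2)"
proof -
  define r where "r = sqrt (real n)"
  define W where "W = B*\<sigma>"
  define l where "l = \<delta>/r"
  define M where "M = max (r*\<bar>x\<bar> - r*W) 0 + \<delta>"
  define p where "p = max (-W) (min (W-l) (x - l/2))"
  have r: "r > 0" using n by (simp add: r_def)
  have W: "W > 0" using B sg by (simp add: W_def)
  have l: "l > 0" "l \<le> 2*W" using d r by (auto simp: l_def W_def r_def field_simps)
  have pd: "\<And>u. prior_dens B \<sigma> u = indicator {-W..W} u / (2*W)"
    unfolding W_def by (rule pd_ind[OF B sg])
  have Mr: "M = r * (max (\<bar>x\<bar> - W) 0 + l)"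
    using r by (simp add: M_def l_def max_def field_simps)
  have M0: "M \<ge> 0" using d by (simp add: M_def)
  define c where "c = exp (t\<^sup>2/2) * sqrt (2*pi) / (2*W*r)"
  define f1 where "f1 = (\<lambda>u. exp (t* sqrt n*(u-x)) * lik n x u * prior_dens B \<sigma> u)"
  define f2 where "f2 = (\<lambda>u. lik n x u * prior_dens B \<sigma> u)"
  have f1i: "integrable lborel f1"
  proof -
    have "integrable lborel (\<lambda>u. (exp (t* sqrt n*(u-x)) * lik n x u / (2*W)) * indicator {-W..W} u)"
      using W by (intro borel_integrable_atLeastAtMost) (auto simp: lik_def intro!: continuous_intros)
    then show ?thesis unfolding f1_def pd by (simp add: field_simps)
  qed
  have f2i: "integrable lborel f2"
  proof -
    have "integrable lborel (\<lambda>u. (lik n x u / (2*W)) * indicator {-W..W} u)"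
      using W by (intro borel_integrable_atLeastAtMost) (auto simp: lik_def intro!: continuous_intros)
    then show ?thesis unfolding f2_def pd by (simp add: field_simps)
  qed
  have num: "integral\<^sup>L lborel f1 \<le> c"
  proof -
    have "integral\<^sup>L lborel f1 \<le> (LINT u|lborel. c * normal_density (x+t/r) (1/r) u)"
    proof (rule integral_mono')
      show "integrable lborel (\<lambda>u. c * normal_density (x+t/r) (1/r) u)" using r by simp
      fix u
      show "0 \<le> c * normal_density (x+t/r) (1/r) u" using W r by (simp add: c_def)
      have "f1 u = exp (t\<^sup>2/2) * exp (-(r*(u-x)-t)\<^sup>2/2) * prior_dens B \<sigma> u"
        unfolding f1_def using E1[OF r_def, of t u x] by (simp add: r_def)
      also have "\<dots> \<le> exp (t\<^sup>2/2) * exp (-(r*(u-x)-t)\<^sup>2/2) * (1/(2*W))"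
        using W by (intro mult_left_mono) (auto simp: pd indicator_def)
      also have "\<dots> = c * normal_density (x+t/r) (1/r) u"
        unfolding E2[OF r] c_def using r by (simp add: field_simps)
      finally show "f1 u \<le> c * normal_density (x+t/r) (1/r) u" .
    qed
    also have "\<dots> = c" using r by simp
    finally show ?thesis .
  qed
  have den: "exp (-M\<^sup>2/2) / (2*W) * l \<le> integral\<^sup>L lborel f2"
  proof -
    have "(LINT u|lborel. exp (-M\<^sup>2/2) / (2*W) * indicator {p..p+l} u) \<le> integral\<^sup>L lborel f2"
    proof (rule integral_mono[OF _ f2i])
      show "integrable lborel (\<lambda>u. exp (-M\<^sup>2/2) / (2*W) * indicator {p..p+l} u)"
        by (rule borel_integrable_atLeastAtMost) simp
      fix u
      show "exp (-M\<^sup>2/2) / (2*W) * indicator {p..p+l} u \<le> f2 u"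
      proof (cases "u \<in> {p..p+l}")
        case True
        have ic: "-W \<le> p" "p + l \<le> W" "\<bar>u - x\<bar> \<le> max (\<bar>x\<bar> - W) 0 + l"
          using interval_choice[OF l, of x] True by (auto simp: p_def)
        then have uW: "u \<in> {-W..W}" using True by auto
        have "r*\<bar>u-x\<bar> \<le> M" unfolding Mr using ic(3) r by (simp add: mult_left_mono)
        then have "(r*\<bar>u-x\<bar>)\<^sup>2 \<le> M\<^sup>2" using r by (intro power_mono) auto
        then have "real n * (u-x)\<^sup>2 \<le> M\<^sup>2" using n by (simp add: r_def power_mult_distrib)
        then have "exp (-M\<^sup>2/2) \<le> lik n x u" unfolding lik_def by simp
        then show ?thesis using True uW W unfolding f2_def pd by (simp add: divide_right_mono)
      next
        case False
        then show ?thesis using W by (simp add: f2_def pd lik_def)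
      qed
    qed
    moreover have "(LINT u|lborel. exp (-M\<^sup>2/2) / (2*W) * indicator {p..p+l} u) = exp (-M\<^sup>2/2) / (2*W) * l"
      using l by simp
    ultimately show ?thesis using l by simp
  qed
  have Dpos: "0 < exp (-M\<^sup>2/2) / (2*W) * l" using W l by simp
  have I2: "0 < integral\<^sup>L lborel f2" using Dpos den by linarith
  have "post_exp n B \<sigma> (\<lambda>u. exp (t* sqrt n*(u-x))) x = integral\<^sup>L lborel f1 / integral\<^sup>L lborel f2"
    unfolding post_exp_def f1_def f2_def by simp
  also have "\<dots> \<le> c / integral\<^sup>L lborel f2"
    using num den Dpos by (intro divide_right_mono) auto
  also have "\<dots> \<le> c / (exp (-M\<^sup>2/2) / (2*W) * l)"
    using den Dpos W r l I2 by (intro divide_left_mono) (auto simp: c_def intro!: mult_pos_pos divide_pos_pos)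
  also have "\<dots> = exp (t\<^sup>2/2) * sqrt (2*pi) / \<delta> * exp (M\<^sup>2/2)"
    using W r d by (simp add: c_def l_def exp_minus field_simps)
  finally show ?thesis by (simp add: M_def r_def W_def)
qed


lemma ed_int: assumes "(d::real) > 0" shows "(\<integral>\<^sup>+x. ennreal (exponential_density d x) \<partial>lborel) = 1"
proof -
  interpret prob_space "density lborel (exponential_density d)"
    using prob_space_exponential_density[OF assms] .
  have "emeasure (density lborel (exponential_density d)) UNIV = 1"
    using emeasure_space_1 by simp
  then show ?thesis by (simp add: emeasure_density)
qed
lemma ed_int2: assumes "(d::real) > 0" shows "(\<integral>\<^sup>+x. ennreal (exponential_density d (-x)) \<partial>lborel) = 1"
proof -
  have "(\<integral>\<^sup>+x. ennreal (exponential_density d x) \<partial>lborel) = ennreal \<bar>-1\<bar> * (\<integral>\<^sup>+x. ennreal (exponential_density d (0 + (-1) * x)) \<partial>lborel)"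
    by (rule nn_integral_real_affine) auto
  then show ?thesis using ed_int[OF assms] by simp
qed
lemma laplace_int: assumes "(d::real) > 0" "K \<ge> 0"
  shows "(\<integral>\<^sup>+x. ennreal (K * (exponential_density d x + exponential_density d (-x))) \<partial>lborel) = ennreal (2*K)"
proof -
  have "(\<integral>\<^sup>+x. ennreal (K * (exponential_density d x + exponential_density d (-x))) \<partial>lborel)
     = (\<integral>\<^sup>+x. ennreal K * (ennreal (exponential_density d x) + ennreal (exponential_density d (-x))) \<partial>lborel)"
    using assms by (intro nn_integral_cong) (simp add: ennreal_mult ennreal_plus exponential_density_nonneg)
  also have "\<dots> = ennreal K * ((\<integral>\<^sup>+x. ennreal (exponential_density d x) \<partial>lborel) + (\<integral>\<^sup>+x. ennreal (exponential_density d (-x)) \<partial>lborel))"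
    by (subst nn_integral_cmult) (auto simp: nn_integral_add)
  also have "\<dots> = ennreal K * 2" using assms ed_int ed_int2
    by simp
  also have "\<dots> = ennreal (2*K)" using assms
    by (subst ennreal_mult) (auto simp: mult.commute)
  finally show ?thesis .
qed

lemma level:
  fixes \<alpha> :: real and n l :: nat
  assumes a: "\<alpha> > 0" and n: "n \<ge> 2" and lL: "int l \<le> L_cut \<alpha> n"
  shows "sqrt (real n) * sigma_lev \<alpha> l \<ge> 1/2"
proof -
  have n0: "real n \<ge> 2" using n by simp
  have ln2: "ln (real n) \<ge> 1/2"
  proof -
    have "ln (1/2::real) \<le> -1/2" using ln_le_minus_one[of "1/2::real"] by simp
    then have "ln (2::real) \<ge> 1/2" by (simp add: ln_div)
    moreover have "ln (2::real) \<le> ln (real n)" using n0 by simp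
    ultimately show ?thesis by linarith
  qed
  define q where "q = real n / ln (real n)"
  have q: "q > 0" using n0 ln2 by (simp add: q_def)
  define z where "z = q powr (1 / (2*\<alpha>+1))"
  have z: "z > 0" using q by (simp add: z_def)
  have "real l \<le> log 2 z"
    using lL unfolding L_cut_def z_def q_def by linarith
  then have "2 powr real l \<le> z" using z by (simp add: le_log_iff)
  then have "(2 powr real l) powr (2*\<alpha>+1) \<le> z powr (2*\<alpha>+1)"
    using a by (intro powr_mono2) auto
  also have "z powr (2*\<alpha>+1) = q" unfolding z_def powr_powr using a q by simp
  finally have h: "2 powr (real l * (2*\<alpha>+1)) \<le> q" by (simp add: powr_powr)
  have sq: "(sigma_lev \<alpha> l)\<^sup>2 = 1 / 2 powr (real l * (2*\<alpha>+1))"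
  proof -
    have "(sigma_lev \<alpha> l)\<^sup>2 = 2 powr (- (real l * (1/2 + \<alpha>)) + - (real l * (1/2 + \<alpha>)))"
      unfolding sigma_lev_def power2_eq_square powr_add by simp
    also have "- (real l * (1/2 + \<alpha>)) + - (real l * (1/2 + \<alpha>)) = - (real l * (2*\<alpha>+1))"
      by (simp add: algebra_simps)
    finally show ?thesis by (simp add: powr_minus divide_inverse)
  qed
  have "real n * (sigma_lev \<alpha> l)\<^sup>2 \<ge> ln (real n)"
  proof -
    have p: "2 powr (real l * (2*\<alpha>+1)) > 0" by simp
    have "ln (real n) = real n / q" using ln2 n0 by (simp add: q_def)
    also have "\<dots> \<le> real n / 2 powr (real l * (2*\<alpha>+1))"
      using h p n0 q by (intro divide_left_mono) auto
    finally show ?thesis unfolding sq by simp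
  qed
  then have "real n * (sigma_lev \<alpha> l)\<^sup>2 \<ge> (1/2)\<^sup>2" using ln2 by (simp add: power2_eq_square)
  then have "sqrt ((1/2)\<^sup>2) \<le> sqrt (real n * (sigma_lev \<alpha> l)\<^sup>2)"
    using real_sqrt_le_mono by blast
  moreover have "sigma_lev \<alpha> l > 0" by (simp add: sigma_lev_def)
  ultimately show ?thesis by (simp add: real_sqrt_mult)
qed

lemma pt_bound:
  fixes n :: nat and B R \<sigma> \<delta> t e f :: real
  assumes n: "n > 0" and BR: "R < B" "R > 0" and d: "\<delta> = (B-R)/4" and sg: "\<sigma> > 0"
    and lev: "sqrt (real n) * \<sigma> \<ge> 1/2" and f: "\<bar>f\<bar> \<le> R*\<sigma>"
  shows "std_normal_density e * post_exp n B \<sigma> (\<lambda>u. exp (t * sqrt (real n) * (u - (f + e / sqrt (real n))))) (f + e / sqrt (real n))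
     \<le> exp (t\<^sup>2/2) * exp (\<delta>\<^sup>2) / \<delta>\<^sup>2 * (exponential_density \<delta> e + exponential_density \<delta> (-e))"
proof -
  define r where "r = sqrt (real n)"
  define x where "x = f + e / r"
  have r: "r > 0" using n by (simp add: r_def)
  have B: "B > 0" using BR by simp
  have d0: "\<delta> > 0" using BR d by simp
  have dle: "\<delta> \<le> 2 * sqrt (real n) * (B*\<sigma>)"
  proof -
    have "1 \<le> 2*(sqrt (real n)*\<sigma>)" using lev by simp
    then have "B*1 \<le> B*(2*(sqrt (real n)*\<sigma>))" using B by (intro mult_left_mono) auto
    then have "B \<le> B*(2*(sqrt (real n)*\<sigma>))" by simp
    moreover have "\<delta> \<le> B" using d BR by simp
    ultimately have "\<delta> \<le> B*(2*(sqrt (real n)*\<sigma>))" by (rule order_trans[rotated])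
    then show ?thesis by (simp add: mult_ac)
  qed
  define M where "M = max (sqrt (real n) * \<bar>x\<bar> - sqrt (real n) * (B*\<sigma>)) 0 + \<delta>"
  have pb: "post_exp n B \<sigma> (\<lambda>u. exp (t * sqrt (real n) * (u - x))) x
      \<le> exp (t\<^sup>2/2) * sqrt (2*pi) / \<delta> * exp (M\<^sup>2/2)"
    unfolding M_def by (rule post_bound[OF n B sg d0 dle])
  have rx: "r * \<bar>x\<bar> \<le> r*R*\<sigma> + \<bar>e\<bar>"
  proof -
    have "r * \<bar>x\<bar> = \<bar>r*f + e\<bar>" using r by (simp add: x_def abs_mult[symmetric] field_simps)
    also have "\<dots> \<le> r*\<bar>f\<bar> + \<bar>e\<bar>" using r by (simp add: abs_triangle_ineq[THEN order_trans] abs_mult)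
    also have "\<dots> \<le> r*R*\<sigma> + \<bar>e\<bar>" using f r by (simp add: mult_left_mono mult.assoc)
    finally show ?thesis .
  qed
  have hh: "r*\<sigma>*(B-R) \<ge> (B-R)/2" using lev BR unfolding r_def
    using mult_right_mono[of "1/2" "sqrt (real n) * \<sigma>" "B-R"] by simp
  have A: "r*\<bar>x\<bar> - r*(B*\<sigma>) \<le> \<bar>e\<bar> - 2*\<delta>"
  proof -
    have "r*\<sigma>*(B-R) = r*(B*\<sigma>) - r*R*\<sigma>" by (simp add: algebra_simps)
    then show ?thesis using hh rx d by linarith
  qed
  have Mle: "M \<le> max (\<bar>e\<bar> - 2*\<delta>) 0 + \<delta>" unfolding M_def r_def[symmetric]
    using A by (simp add: max_def)
  have M2: "M\<^sup>2 \<le> (\<bar>e\<bar>-\<delta>)\<^sup>2 + \<delta>\<^sup>2"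
  proof (cases "\<bar>e\<bar> - 2*\<delta> \<ge> 0")
    case True
    then have "M \<le> \<bar>e\<bar> - \<delta>" "0 \<le> M" using Mle d0 by (auto simp: M_def)
    then have "M\<^sup>2 \<le> (\<bar>e\<bar>-\<delta>)\<^sup>2" by (intro power_mono) auto
    then show ?thesis using zero_le_power2[of \<delta>] by linarith
  next
    case False
    then have "M \<le> \<delta>" "0 \<le> M" using Mle d0 by (auto simp: M_def)
    then have "M\<^sup>2 \<le> \<delta>\<^sup>2" by (intro power_mono) auto
    then show ?thesis using zero_le_power2[of "\<bar>e\<bar>-\<delta>"] by linarith
  qed
  have phi0: "std_normal_density e \<ge> 0" by simp
  have "std_normal_density e * post_exp n B \<sigma> (\<lambda>u. exp (t * sqrt (real n) * (u - x))) x
      \<le> std_normal_density e * (exp (t\<^sup>2/2) * sqrt (2*pi) / \<delta> * exp (((\<bar>e\<bar>-\<delta>)\<^sup>2 + \<delta>\<^sup>2)/2))"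
  proof -
    have "exp (M\<^sup>2/2) \<le> exp (((\<bar>e\<bar>-\<delta>)\<^sup>2 + \<delta>\<^sup>2)/2)" using M2 by simp
    then have "exp (t\<^sup>2/2) * sqrt (2*pi) / \<delta> * exp (M\<^sup>2/2) \<le> exp (t\<^sup>2/2) * sqrt (2*pi) / \<delta> * exp (((\<bar>e\<bar>-\<delta>)\<^sup>2 + \<delta>\<^sup>2)/2)"
      using d0 by (intro mult_left_mono) auto
    then show ?thesis using pb phi0 by (intro mult_left_mono) auto
  qed
  also have "\<dots> = exp (t\<^sup>2/2) / \<delta> * exp (\<delta>\<^sup>2) * exp (-\<delta>*\<bar>e\<bar>)"
  proof -
    have "-(e\<^sup>2)/2 + ((\<bar>e\<bar>-\<delta>)\<^sup>2 + \<delta>\<^sup>2)/2 = \<delta>\<^sup>2 + -\<delta>*\<bar>e\<bar>"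
      by (simp add: power2_eq_square field_simps)
    then have "exp (-(e\<^sup>2)/2) * exp (((\<bar>e\<bar>-\<delta>)\<^sup>2 + \<delta>\<^sup>2)/2) = exp (\<delta>\<^sup>2) * exp (-\<delta>*\<bar>e\<bar>)"
      by (simp add: exp_add[symmetric])
    then show ?thesis unfolding std_normal_density_def using d0
      by (simp add: field_simps)
  qed
  also have "\<dots> \<le> exp (t\<^sup>2/2) / \<delta> * exp (\<delta>\<^sup>2) * ((exponential_density \<delta> e + exponential_density \<delta> (-e)) / \<delta>)"
  proof -
    have "exp (-\<delta>*\<bar>e\<bar>) \<le> (exponential_density \<delta> e + exponential_density \<delta> (-e)) / \<delta>"
      using d0 by (cases "e < 0") (auto simp: exponential_density_def field_simps)
    then show ?thesis using d0 by (intro mult_left_mono) auto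
  qed
  also have "\<dots> = exp (t\<^sup>2/2) * exp (\<delta>\<^sup>2) / \<delta>\<^sup>2 * (exponential_density \<delta> e + exponential_density \<delta> (-e))"
    by (simp add: power2_eq_square field_simps)
  finally show ?thesis by (simp add: x_def r_def)
qed

theorem lemma1:
  fixes \<alpha> R B :: real and f0 :: "nat \<Rightarrow> nat \<Rightarrow> real"
  assumes "\<alpha> > 0" and "R > 0" and "B > R"
    and "\<And>l k. k < 2 ^ l \<Longrightarrow> 2 powr (real l * (1/2 + \<alpha>)) * \<bar>f0 l k\<bar> \<le> R"
  shows "\<exists>C > 0. \<forall>(t::real) (n::nat) (l::nat) (k::nat).
           n \<ge> 2 \<longrightarrow> int l \<le> L_cut \<alpha> n \<longrightarrow> k \<le> 2 ^ l - 1 \<longrightarrow>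
           (LINT e|lborel. std_normal_density e *
              post_exp n B (sigma_lev \<alpha> l)
                (\<lambda>u. exp (t * sqrt (real n) * (u - (f0 l k + e / sqrt (real n)))))
                (f0 l k + e / sqrt (real n)))
           \<le> C * exp (t^2 / 2)"
proof -
  define \<delta> where "\<delta> = (B-R)/4"
  have d0: "\<delta> > 0" using assms(2,3) by (simp add: \<delta>_def)
  define C where "C = 2 * exp (\<delta>\<^sup>2) / \<delta>\<^sup>2"
  have C0: "C > 0" using d0 by (simp add: C_def)
  show ?thesis
  proof (intro exI[of _ C] conjI allI impI C0)
    fix t :: real and n l k :: nat
    assume n: "n \<ge> 2" and lL: "int l \<le> L_cut \<alpha> n" and k: "k \<le> 2 ^ l - 1"
    define \<sigma> where "\<sigma> = sigma_lev \<alpha> l"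
    have sg: "\<sigma> > 0" by (simp add: \<sigma>_def sigma_lev_def)
    have lev: "sqrt (real n) * \<sigma> \<ge> 1/2" unfolding \<sigma>_def by (rule level[OF assms(1) n lL])
    have p2: "(0::nat) < 2 ^ l" by simp
    have "2 ^ l - 1 < (2::nat) ^ l" using p2 by simp
    then have kl: "k < 2 ^ l" using k by (rule le_less_trans[rotated])
    have f: "\<bar>f0 l k\<bar> \<le> R*\<sigma>"
    proof -
      have h: "2 powr (real l * (1/2 + \<alpha>)) * \<bar>f0 l k\<bar> \<le> R" by (rule assms(4)[OF kl])
      have p: "2 powr (real l * (1/2 + \<alpha>)) > 0" by simp
      have s1: "\<sigma> = 1 / 2 powr (real l * (1/2 + \<alpha>))" unfolding \<sigma>_def sigma_lev_def by (rule powr_minus_divide)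
      have "\<bar>f0 l k\<bar> \<le> R / 2 powr (real l * (1/2 + \<alpha>))"
        using h p by (subst pos_le_divide_eq) (auto simp: mult.commute)
      then show ?thesis unfolding s1 by simp
    qed
    define K where "K = exp (t\<^sup>2/2) * exp (\<delta>\<^sup>2) / \<delta>\<^sup>2"
    have K0: "K \<ge> 0" by (simp add: K_def)
    have "(\<integral>\<^sup>+e. ennreal (std_normal_density e *
              post_exp n B (sigma_lev \<alpha> l)
                (\<lambda>u. exp (t * sqrt (real n) * (u - (f0 l k + e / sqrt (real n)))))
                (f0 l k + e / sqrt (real n))) \<partial>lborel)
        \<le> (\<integral>\<^sup>+e. ennreal (K * (exponential_density \<delta> e + exponential_density \<delta> (-e))) \<partial>lborel)"
    proof (rule nn_integral_mono)
      fix e :: real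
      have "std_normal_density e *
              post_exp n B \<sigma>
                (\<lambda>u. exp (t * sqrt (real n) * (u - (f0 l k + e / sqrt (real n)))))
                (f0 l k + e / sqrt (real n)) \<le> K * (exponential_density \<delta> e + exponential_density \<delta> (-e))"
        unfolding K_def using n
        by (intro pt_bound[OF _ assms(3) assms(2) \<delta>_def sg lev f]) auto
      then show "ennreal (std_normal_density e *
              post_exp n B (sigma_lev \<alpha> l)
                (\<lambda>u. exp (t * sqrt (real n) * (u - (f0 l k + e / sqrt (real n)))))
                (f0 l k + e / sqrt (real n))) \<le> ennreal (K * (exponential_density \<delta> e + exponential_density \<delta> (-e)))"
        unfolding \<sigma>_def by (rule ennreal_leI)
    qed
    also have "\<dots> = ennreal (2*K)" by (rule laplace_int[OF d0 K0])
    also have "2*K = C * exp (t^2/2)" by (simp add: K_def C_def)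
    finally show "(LINT e|lborel. std_normal_density e *
              post_exp n B (sigma_lev \<alpha> l)
                (\<lambda>u. exp (t * sqrt (real n) * (u - (f0 l k + e / sqrt (real n)))))
                (f0 l k + e / sqrt (real n)))
           \<le> C * exp (t^2 / 2)"
      using C0 by (intro integral_real_bounded) auto
  qed
qed

end
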